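(* Let $G\sim\mathrm{ER}(n,p)$, $\varepsilon\in[0,1/2)$, $\delta>0$. Consider the 2-path voting estimator: fix a center vertex $c$, set $\hat x_c=0$, and for each $v\ne c$, for each $k\notin\{c,v\}$ such that both $(c,k)$ and $(k,v)$ are edges of $G$, record the vote $Y_{(c,k)}\oplus Y_{(k,v)}$; set $\hat x_v$ to the value receiving strictly more votes (a tie counts as failure). If $$\frac{(n-2)p^2(1-2\varepsilon)^4/2}{1+\frac13\left(1+p^2(1-2\varepsilon)^2\right)(1-2\varepsilon)^2}\ \ge\ (1+\delta)\log n,$$ then with probability at least $1-n^{-\delta}$ the estimator satisfies $\hat x\in\{x,x\oplus1^n\}$.
   Context: Model: $G=(V,E)$ with $V=[n]$ drawn from $\mathrm{ER}(n,p)$ (each edge present independently with probability $p$); unknown $x\in\{0,1\}^n$; for each edge $(i,j)$ one observes $Y_{(i,j)}=x_i\oplus x_j\oplus Z_{(i,j)}$ (mod 2) with $Z_{(i,j)}$ i.i.d. Bernoulli$(\varepsilon)$ independent of $G$. Logarithms are natural. *)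

theory Defs
  imports "HOL-Probability.Probability"
begin

text \<open>Vertices are 0..<n. An unordered edge {i,j} (i \<noteq> j) is encoded as the pair (min i j, max i j).\<close>

definition ekey :: "nat \<Rightarrow> nat \<Rightarrow> nat \<times> nat" where
  "ekey i j = (min i j, max i j)"

definition all_edges :: "nat \<Rightarrow> (nat \<times> nat) set" where
  "all_edges n = {(i, j). i < j \<and> j < n}"

text \<open>Joint law of (G, Z): G ~ ER(n,p) as edge indicator; Z i.i.d. Bernoulli(eps) on all potential edges
  (Z is only used on edges present in G).\<close>
definition ER_noise_pmf :: "nat \<Rightarrow> real \<Rightarrow> real \<Rightarrow> ((nat \<times> nat \<Rightarrow> bool) \<times> (nat \<times> nat \<Rightarrow> bool)) pmf" where
  "ER_noise_pmf n p eps =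
     pair_pmf (Pi_pmf (all_edges n) False (\<lambda>_. bernoulli_pmf p))
              (Pi_pmf (all_edges n) False (\<lambda>_. bernoulli_pmf eps))"

text \<open>Observation on edge (i,j): Y = x_i xor x_j xor Z_(i,j) (booleans, True = 1).\<close>
definition obs :: "(nat \<Rightarrow> bool) \<Rightarrow> (nat \<times> nat \<Rightarrow> bool) \<Rightarrow> nat \<Rightarrow> nat \<Rightarrow> bool" where
  "obs x z i j = ((x i \<noteq> x j) \<noteq> z (ekey i j))"

definition votes :: "nat \<Rightarrow> nat \<Rightarrow> (nat \<Rightarrow> bool) \<Rightarrow> (nat \<times> nat \<Rightarrow> bool) \<Rightarrow> (nat \<times> nat \<Rightarrow> bool)
                      \<Rightarrow> nat \<Rightarrow> bool \<Rightarrow> nat" where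
  "votes n c x g z v b = card {k \<in> {0..<n} - {c, v}. g (ekey c k) \<and> g (ekey k v) \<and>
                              (obs x z c k \<noteq> obs x z k v) = b}"

definition two_path_est :: "nat \<Rightarrow> nat \<Rightarrow> (nat \<Rightarrow> bool) \<Rightarrow> (nat \<times> nat \<Rightarrow> bool) \<Rightarrow> (nat \<times> nat \<Rightarrow> bool)
                            \<Rightarrow> nat \<Rightarrow> bool option" where
  "two_path_est n c x g z v =
     (if v = c then Some False
      else if votes n c x g z v True > votes n c x g z v False then Some True
      else if votes n c x g z v False > votes n c x g z v True then Some False
      else None)"

definition est_success :: "nat \<Rightarrow> nat \<Rightarrow> (nat \<Rightarrow> bool) \<Rightarrow> (nat \<times> nat \<Rightarrow> bool) \<Rightarrow> (nat \<times> nat \<Rightarrow> bool) \<Rightarrow> bool" where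
  "est_success n c x g z \<longleftrightarrow>
     (\<forall>v<n. two_path_est n c x g z v = Some (x v)) \<or>
     (\<forall>v<n. two_path_est n c x g z v = Some (\<not> x v))"

end

theory Submission
  imports Defs
begin


lemma finite_set_Pi_pmf_bool:
  assumes "finite A"
  shows "finite (set_pmf (Pi_pmf A d (p :: _ \<Rightarrow> bool pmf)))"
  using assms by (simp add: set_Pi_pmf) (intro finite_PiE_dflt, auto)

lemma expectation_pair_pmf_finite:
  fixes f :: "'a \<times> 'b \<Rightarrow> real"
  assumes fa: "finite (set_pmf A)" and fb: "finite (set_pmf B)"
  shows "measure_pmf.expectation (pair_pmf A B) f =
         measure_pmf.expectation A (\<lambda>a. measure_pmf.expectation B (\<lambda>b. f (a,b)))"
proof -
  have "measure_pmf.expectation (pair_pmf A B) f =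
        (\<Sum>x\<in>set_pmf A \<times> set_pmf B. f x * pmf (pair_pmf A B) x)"
    by (rule integral_measure_pmf_real) (auto simp: assms)
  also have "\<dots> = (\<Sum>(a,b)\<in>set_pmf A \<times> set_pmf B. f (a,b) * pmf B b * pmf A a)"
    by (intro sum.cong refl) (auto simp: pmf_pair)
  also have "\<dots> = (\<Sum>a\<in>set_pmf A. \<Sum>b\<in>set_pmf B. f (a,b) * pmf B b * pmf A a)"
    by (simp add: sum.cartesian_product)
  also have "\<dots> = (\<Sum>a\<in>set_pmf A. measure_pmf.expectation B (\<lambda>b. f (a,b)) * pmf A a)"
  proof (intro sum.cong refl)
    fix a
    have "measure_pmf.expectation B (\<lambda>b. f (a,b)) = (\<Sum>b\<in>set_pmf B. f (a,b) * pmf B b)"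
      by (rule integral_measure_pmf_real) (auto simp: assms)
    then show "(\<Sum>b\<in>set_pmf B. f (a,b) * pmf B b * pmf A a) = measure_pmf.expectation B (\<lambda>b. f (a,b)) * pmf A a"
      by (simp add: sum_distrib_right)
  qed
  also have "\<dots> = measure_pmf.expectation A (\<lambda>a. measure_pmf.expectation B (\<lambda>b. f (a,b)))"
    by (rule integral_measure_pmf_real[symmetric]) (auto simp: assms)
  finally show ?thesis .
qed

lemma one_block:
  fixes F :: "'k \<Rightarrow> 'b \<Rightarrow> real" and a :: "'k \<Rightarrow> 'e"
  assumes fA: "finite A" and inj: "inj_on a K" and sub: "a ` K \<subseteq> A"
    and fD: "finite (set_pmf D)" and nn: "\<And>k u. F k u \<ge> 0"
  shows "measure_pmf.expectation (Pi_pmf A d (\<lambda>_. D)) (\<lambda>y. \<Prod>k\<in>K. F k (y (a k)))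
         = (\<Prod>k\<in>K. measure_pmf.expectation D (F k))"
proof -
  define G where "G e u = (if e \<in> a ` K then F (inv_into K a e) u else 1)" for e u
  have G_out: "e \<notin> a ` K \<Longrightarrow> G e = (\<lambda>_. 1)" for e by (auto simp: G_def fun_eq_iff)
  have G_in: "k \<in> K \<Longrightarrow> G (a k) = F k" for k by (auto simp: G_def fun_eq_iff inv_into_f_f[OF inj])
  have fK: "finite K" using finite_subset[OF sub fA] inj finite_imageD by blast
  have eq: "(\<Prod>k\<in>K. F k (y (a k))) = (\<Prod>e\<in>A. G e (y e))" for y
  proof -
    have "(\<Prod>e\<in>A. G e (y e)) = (\<Prod>e\<in>a ` K. G e (y e))"
      by (rule prod.mono_neutral_right[OF fA sub]) (auto simp: G_def)
    also have "\<dots> = (\<Prod>k\<in>K. G (a k) (y (a k)))"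
      by (rule prod.reindex[OF inj, unfolded o_def])
    also have "\<dots> = (\<Prod>k\<in>K. F k (y (a k)))"
      by (intro prod.cong refl) (simp add: G_def inv_into_f_f[OF inj])
    finally show ?thesis by simp
  qed
  have "measure_pmf.expectation (Pi_pmf A d (\<lambda>_. D)) (\<lambda>y. \<Prod>k\<in>K. F k (y (a k)))
      = measure_pmf.expectation (Pi_pmf A d (\<lambda>_. D)) (\<lambda>y. \<Prod>e\<in>A. G e (y e))"
    by (simp add: eq)
  also have "\<dots> = (\<Prod>e\<in>A. measure_pmf.expectation D (G e))"
    by (rule expectation_prod_Pi_pmf[OF fA]) (auto simp: G_def nn integrable_measure_pmf_finite[OF fD])
  also have "\<dots> = (\<Prod>e\<in>a ` K. measure_pmf.expectation D (G e))"
    by (rule prod.mono_neutral_right[OF fA sub]) (auto simp: G_out)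
  also have "\<dots> = (\<Prod>k\<in>K. measure_pmf.expectation D (G (a k)))"
    by (rule prod.reindex[OF inj, unfolded o_def])
  also have "\<dots> = (\<Prod>k\<in>K. measure_pmf.expectation D (F k))"
    by (intro prod.cong refl) (simp add: G_in)
  finally show ?thesis .
qed

lemma two_block:
  fixes F :: "'k \<Rightarrow> bool \<Rightarrow> bool \<Rightarrow> real" and a b :: "'k \<Rightarrow> 'e"
  assumes fA: "finite A" and inja: "inj_on a K" and injb: "inj_on b K"
    and suba: "a ` K \<subseteq> A" and subb: "b ` K \<subseteq> A" and disj: "a ` K \<inter> b ` K = {}"
    and nn: "\<And>k u w. F k u w \<ge> 0"
  shows "measure_pmf.expectation (Pi_pmf A d (\<lambda>_. D)) (\<lambda>y. \<Prod>k\<in>K. F k (y (a k)) (y (b k)))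
         = (\<Prod>k\<in>K. measure_pmf.expectation D (\<lambda>u. measure_pmf.expectation D (\<lambda>w. F k u w)))"
proof -
  define E1 where "E1 = a ` K"
  have fE1: "finite E1" using finite_subset[OF suba fA] by (simp add: E1_def)
  have fE2: "finite (A - E1)" using fA by simp
  have fD: "finite (set_pmf D)" by (rule finite_subset[of _ UNIV]) auto
  have AU: "E1 \<union> (A - E1) = A" using suba by (auto simp: E1_def)
  have PU: "Pi_pmf A d (\<lambda>_. D) = map_pmf (\<lambda>(f,g) x. if x \<in> E1 then f x else g x)
             (pair_pmf (Pi_pmf E1 d (\<lambda>_. D)) (Pi_pmf (A - E1) d (\<lambda>_. D)))"
    using Pi_pmf_union[OF fE1 fE2, of d "\<lambda>_. D"] AU by auto
  have "measure_pmf.expectation (Pi_pmf A d (\<lambda>_. D)) (\<lambda>y. \<Prod>k\<in>K. F k (y (a k)) (y (b k)))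
     = measure_pmf.expectation (pair_pmf (Pi_pmf E1 d (\<lambda>_. D)) (Pi_pmf (A - E1) d (\<lambda>_. D)))
         (\<lambda>fg. \<Prod>k\<in>K. F k (fst fg (a k)) (snd fg (b k)))"
    unfolding PU integral_map_pmf
    by (intro Bochner_Integration.integral_cong refl prod.cong)
       (use disj in \<open>auto simp: E1_def case_prod_unfold\<close>)
  also have "\<dots> = measure_pmf.expectation (Pi_pmf E1 d (\<lambda>_. D))
      (\<lambda>f. measure_pmf.expectation (Pi_pmf (A - E1) d (\<lambda>_. D)) (\<lambda>g. \<Prod>k\<in>K. F k (f (a k)) (g (b k))))"
    by (subst expectation_pair_pmf_finite)
       (auto intro: finite_set_Pi_pmf_bool fE1 fE2)
  also have "\<dots> = measure_pmf.expectation (Pi_pmf E1 d (\<lambda>_. D))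
      (\<lambda>f. \<Prod>k\<in>K. measure_pmf.expectation D (F k (f (a k))))"
    by (intro Bochner_Integration.integral_cong refl one_block[OF fE2 injb _ fD nn])
       (use subb disj in \<open>auto simp: E1_def\<close>)
  also have "\<dots> = (\<Prod>k\<in>K. measure_pmf.expectation D (\<lambda>u. measure_pmf.expectation D (\<lambda>w. F k u w)))"
    by (rule one_block[OF fE1 inja _ fD]) (auto simp: E1_def nn intro!: Bochner_Integration.integral_nonneg)
  finally show ?thesis .
qed



lemma markov_pmf:
  fixes f :: "'a \<Rightarrow> real"
  assumes fin: "finite (set_pmf M)" and nn: "\<And>x. f x \<ge> 0" and ge: "\<And>x. x \<in> S \<Longrightarrow> f x \<ge> 1"
  shows "measure_pmf.prob M S \<le> measure_pmf.expectation M f"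
proof -
  have "measure_pmf.prob M S = measure_pmf.expectation M (indicator S)" by simp
  also have "\<dots> \<le> measure_pmf.expectation M f"
    by (intro integral_mono integrable_measure_pmf_finite fin) (auto simp: indicator_def nn ge)
  finally show ?thesis .
qed

lemma prod_vote:
  fixes t :: real
  assumes "finite K"
  shows "(\<Prod>k\<in>K. if P k then (if Q k then t else 1/t) else 1)
         = t ^ card {k\<in>K. P k \<and> Q k} * (1/t) ^ card {k\<in>K. P k \<and> \<not> Q k}"
proof -
  have "(\<Prod>k\<in>K. if P k then (if Q k then t else 1/t) else 1)
      = (\<Prod>k\<in>K \<inter> {k. P k}. (if Q k then t else 1/t)) * (\<Prod>k\<in>K \<inter> - {k. P k}. 1)"
    by (rule prod.If_cases[OF assms])
  also have "(\<Prod>k\<in>K \<inter> {k. P k}. (if Q k then t else 1/t))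
     = (\<Prod>k\<in>K \<inter> {k. P k} \<inter> {k. Q k}. t) * (\<Prod>k\<in>K \<inter> {k. P k} \<inter> - {k. Q k}. 1/t)"
    by (rule prod.If_cases) (use assms in auto)
  also have "K \<inter> {k. P k} \<inter> {k. Q k} = {k\<in>K. P k \<and> Q k}" by auto
  also have "K \<inter> {k. P k} \<inter> - {k. Q k} = {k\<in>K. P k \<and> \<not> Q k}" by auto
  finally show ?thesis by simp
qed

lemma prod_vote_ge1:
  fixes t :: real
  assumes "0 < t" "t \<le> 1" "C \<le> W"
  shows "t ^ C * (1/t) ^ W \<ge> 1"
proof -
  have "(1/t) ^ C \<le> (1/t) ^ W" by (rule power_increasing) (use assms in auto)
  hence "t ^ C * (1/t) ^ C \<le> t ^ C * (1/t) ^ W" by (simp add: assms(1))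
  moreover have "t ^ C * (1/t) ^ C = 1" using assms(1) by (simp add: power_one_over)
  ultimately show ?thesis by simp
qed

lemma M11_bound:
  fixes eps t :: real
  assumes "0 \<le> eps" "eps < 1/2" "t = (if eps = 0 then 1/2 else 1 - (1-2*eps)^2)"
  shows "(t*eps + (1/t)*(1-eps))*eps + ((1/t)*eps + t*(1-eps))*(1-eps) \<le> 1 - (1-2*eps)^4/2"
proof (cases "eps = 0")
  case True thus ?thesis using assms by simp
next
  case False
  hence ep: "eps > 0" using assms by simp
  have tq: "t = 4*eps*(1-eps)" using assms False by (simp add: power2_eq_square algebra_simps)
  have tp: "t > 0" using tq ep assms by simp
  define u where "u = 1/t"
  have u4: "u * (eps * (1-eps)) = 1/4" using tp ep assms unfolding u_def tq by (simp add: field_simps)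
  have "(t*eps + u*(1-eps))*eps + (u*eps + t*(1-eps))*(1-eps)
          = t*(eps^2 + (1-eps)^2) + 2 * (u * (eps * (1-eps)))"
    by (simp add: algebra_simps power2_eq_square)
  hence "(t*eps + u*(1-eps))*eps + (u*eps + t*(1-eps))*(1-eps)
          = t*(eps^2 + (1-eps)^2) + 1/2" using u4 by simp
  hence e: "(t*eps + (1/t)*(1-eps))*eps + ((1/t)*eps + t*(1-eps))*(1-eps)
          = t*(eps^2 + (1-eps)^2) + 1/2" by (simp only: u_def)
  have "t*(eps^2 + (1-eps)^2) + 1/2 = 1 - (1-2*eps)^4/2"
    unfolding tq power4_eq_xxxx power2_eq_square by (simp add: field_simps)
  with e show ?thesis by simp
qed



lemma vertex_bound:
  fixes n c v :: nat and p eps :: real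
  assumes cn: "c < n" and vn: "v < n" and vc: "v \<noteq> c" and p0: "0 \<le> p" and p1: "p \<le> 1"
    and e0: "0 \<le> eps" and e1: "eps < 1/2"
  shows "measure_pmf.prob (ER_noise_pmf n p eps)
     {(g,z). card {k\<in>{0..<n}-{c,v}. g (ekey c k) \<and> g (ekey k v) \<and> z (ekey c k) = z (ekey k v)}
           \<le> card {k\<in>{0..<n}-{c,v}. g (ekey c k) \<and> g (ekey k v) \<and> z (ekey c k) \<noteq> z (ekey k v)}}
     \<le> (1 - p^2 * (1-2*eps)^4/2) ^ (n-2)"
proof -
  define K where "K = {0..<n}-{c,v}"
  define a where "a = (\<lambda>k. ekey c k)"
  define b where "b = (\<lambda>k. ekey k v)"
  define t :: real where "t = (if eps = 0 then 1/2 else 1 - (1-2*eps)^2)"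
  define Fz where "Fz g1 g2 z1 z2 = (if g1 \<and> g2 then (if z1 = z2 then t else 1/t) else (1::real))" for g1 g2 z1 z2 :: bool
  define \<Phi> where "\<Phi> gz = (\<Prod>k\<in>K. Fz (fst gz (a k)) (fst gz (b k)) (snd gz (a k)) (snd gz (b k)))" for gz :: "(nat \<times> nat \<Rightarrow> bool) \<times> (nat \<times> nat \<Rightarrow> bool)"
  define M11 where "M11 = (t*eps + (1/t)*(1-eps))*eps + ((1/t)*eps + t*(1-eps))*(1-eps)"
  have t0: "0 < t" and t1: "t \<le> 1"
  proof -
    show "0 < t"
    proof (cases "eps = 0")
      case False
      hence "0 < 1 - 2*eps" "1 - 2*eps < 1" using e0 e1 by auto
      hence "(1-2*eps)^2 < 1" by (simp add: power_less_one_iff)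
      thus ?thesis using False by (simp add: t_def)
    qed (simp add: t_def)
    show "t \<le> 1" by (simp add: t_def)
  qed
  have Fz_nn: "Fz g1 g2 z1 z2 \<ge> 0" for g1 g2 z1 z2 using t0 by (simp add: Fz_def)
  have fK: "finite K" by (simp add: K_def)
  have cardK: "card K = n - 2"
  proof -
    have "card K = card {0..<n} - card {c,v}" unfolding K_def
      by (rule card_Diff_subset) (use cn vn in auto)
    thus ?thesis using vc by simp
  qed
  have inja: "inj_on a K" unfolding a_def ekey_def inj_on_def by (auto simp: min_def max_def split: if_splits)
  have injb: "inj_on b K" unfolding b_def ekey_def inj_on_def by (auto simp: min_def max_def split: if_splits)
  have suba: "a ` K \<subseteq> all_edges n" unfolding a_def K_def ekey_def all_edges_def using cn by (auto simp: min_def max_def)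
  have subb: "b ` K \<subseteq> all_edges n" unfolding b_def K_def ekey_def all_edges_def using vn by (auto simp: min_def max_def)
  have disj: "a ` K \<inter> b ` K = {}" unfolding a_def b_def K_def ekey_def using vc
    by (auto simp: min_def max_def split: if_splits)
  have fA: "finite (all_edges n)"
    by (rule finite_subset[of _ "{0..<n} \<times> {0..<n}"]) (auto simp: all_edges_def)
  have fin: "finite (set_pmf (ER_noise_pmf n p eps))"
    unfolding ER_noise_pmf_def by (simp add: finite_set_Pi_pmf_bool fA)
  let ?S = "{(g,z::nat\<times>nat\<Rightarrow>bool). card {k\<in>{0..<n}-{c,v}. g (ekey c k) \<and> g (ekey k v) \<and> z (ekey c k) = z (ekey k v)}
           \<le> card {k\<in>{0..<n}-{c,v}. g (ekey c k) \<and> g (ekey k v) \<and> z (ekey c k) \<noteq> z (ekey k v)}}"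
  have step1: "measure_pmf.prob (ER_noise_pmf n p eps) ?S \<le> measure_pmf.expectation (ER_noise_pmf n p eps) \<Phi>"
  proof (rule markov_pmf[OF fin])
    show "\<And>x. 0 \<le> \<Phi> x" unfolding \<Phi>_def by (intro prod_nonneg) (simp add: Fz_nn)
    fix gz assume "gz \<in> ?S"
    then obtain g z :: "nat \<times> nat \<Rightarrow> bool" where gz: "gz = (g,z)" and le:
      "card {k\<in>K. g (a k) \<and> g (b k) \<and> z (a k) = z (b k)} \<le> card {k\<in>K. g (a k) \<and> g (b k) \<and> z (a k) \<noteq> z (b k)}"
      by (auto simp: K_def a_def b_def)
    have "\<Phi> gz = t ^ card {k\<in>K. (g (a k) \<and> g (b k)) \<and> z (a k) = z (b k)} * (1/t) ^ card {k\<in>K. (g (a k) \<and> g (b k)) \<and> \<not> z (a k) = z (b k)}"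
      unfolding \<Phi>_def gz Fz_def by (simp add: prod_vote[OF fK])
    also have "\<dots> \<ge> 1" by (rule prod_vote_ge1[OF t0 t1]) (use le in simp)
    finally show "1 \<le> \<Phi> gz" .
  qed
  define Mz where "Mz g1 g2 = measure_pmf.expectation (bernoulli_pmf eps)
       (\<lambda>u. measure_pmf.expectation (bernoulli_pmf eps) (\<lambda>w. Fz g1 g2 u w))" for g1 g2
  define m where "m = measure_pmf.expectation (bernoulli_pmf p)
       (\<lambda>u. measure_pmf.expectation (bernoulli_pmf p) (\<lambda>w. Mz u w))"
  have Mz_nn: "Mz u w \<ge> 0" for u w unfolding Mz_def
    by (intro Bochner_Integration.integral_nonneg Fz_nn)
  have step2: "measure_pmf.expectation (ER_noise_pmf n p eps) \<Phi> = m ^ card K"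
  proof -
    have "measure_pmf.expectation (ER_noise_pmf n p eps) \<Phi>
      = measure_pmf.expectation (Pi_pmf (all_edges n) False (\<lambda>_. bernoulli_pmf p))
         (\<lambda>g. measure_pmf.expectation (Pi_pmf (all_edges n) False (\<lambda>_. bernoulli_pmf eps))
           (\<lambda>z. \<Phi> (g,z)))"
      unfolding ER_noise_pmf_def
      by (rule expectation_pair_pmf_finite) (simp_all add: finite_set_Pi_pmf_bool fA)
    also have "\<dots> = measure_pmf.expectation (Pi_pmf (all_edges n) False (\<lambda>_. bernoulli_pmf p))
         (\<lambda>g. \<Prod>k\<in>K. Mz (g (a k)) (g (b k)))"
      unfolding \<Phi>_def fst_conv snd_conv Mz_def
      by (intro Bochner_Integration.integral_cong refl two_block[OF fA inja injb suba subb disj] Fz_nn)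
    also have "\<dots> = (\<Prod>k\<in>K. m)"
      unfolding m_def
      by (intro two_block[OF fA inja injb suba subb disj] Mz_nn)
    finally show ?thesis by simp
  qed
  have Mz_TT: "Mz True True = M11" unfolding Mz_def M11_def Fz_def using e0 e1 by simp
  have Mz_o: "Mz u w = 1" if "\<not> (u \<and> w)" for u w
  proof -
    have "Fz u w = (\<lambda>_ _. 1)" using that unfolding Fz_def by (auto simp: fun_eq_iff)
    thus ?thesis unfolding Mz_def by simp
  qed
  have m_eq: "m = p * (p * M11 + (1 - p)) + (1 - p)"
    unfolding m_def using p0 p1 by (simp add: Mz_TT Mz_o)
  have M11_le: "M11 \<le> 1 - (1-2*eps)^4/2" unfolding M11_def by (rule M11_bound[OF e0 e1 t_def])
  have M11_nn: "M11 \<ge> 0" using Mz_nn[of True True] Mz_TT by simp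
  have m_nn: "m \<ge> 0" unfolding m_eq using p0 p1 M11_nn by simp
  have "m = 1 - p^2 + p^2 * M11" unfolding m_eq by (simp add: algebra_simps power2_eq_square)
  also have "\<dots> \<le> 1 - p^2 + p^2 * (1 - (1-2*eps)^4/2)"
    using M11_le by (intro add_left_mono mult_left_mono) auto
  finally have m_le: "m \<le> 1 - p^2 * (1-2*eps)^4/2" by (simp add: algebra_simps)
  have "measure_pmf.prob (ER_noise_pmf n p eps) ?S \<le> m ^ (n-2)"
    using step1 step2 cardK by simp
  also have "\<dots> \<le> (1 - p^2 * (1-2*eps)^4/2) ^ (n-2)"
    by (rule power_mono[OF m_le m_nn])
  finally show ?thesis .
qed



lemma votes_eq:
  "votes n c x g z v b = card {k\<in>{0..<n}-{c,v}. g (ekey c k) \<and> g (ekey k v) \<and>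
       ((z (ekey c k) = z (ekey k v)) = (b = (x c \<noteq> x v)))}"
  unfolding votes_def obs_def by (intro arg_cong[where f=card]) auto

lemma success_if:
  assumes "\<And>v. v < n \<Longrightarrow> v \<noteq> c \<Longrightarrow>
      card {k\<in>{0..<n}-{c,v}. g (ekey c k) \<and> g (ekey k v) \<and> z (ekey c k) = z (ekey k v)}
    > card {k\<in>{0..<n}-{c,v}. g (ekey c k) \<and> g (ekey k v) \<and> z (ekey c k) \<noteq> z (ekey k v)}"
  shows "est_success n c x g z"
proof -
  have est: "two_path_est n c x g z v = Some (x c \<noteq> x v)" if "v < n" "v \<noteq> c" for v
  proof -
    have v1: "votes n c x g z v (x c \<noteq> x v) = card {k\<in>{0..<n}-{c,v}. g (ekey c k) \<and> g (ekey k v) \<and> z (ekey c k) = z (ekey k v)}"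
      unfolding votes_eq by (intro arg_cong[where f=card]) auto
    have v2: "votes n c x g z v (\<not> (x c \<noteq> x v)) = card {k\<in>{0..<n}-{c,v}. g (ekey c k) \<and> g (ekey k v) \<and> z (ekey c k) \<noteq> z (ekey k v)}"
      unfolding votes_eq by (intro arg_cong[where f=card]) auto
    have A: "votes n c x g z v (x c \<noteq> x v) > votes n c x g z v (\<not> (x c \<noteq> x v))"
      unfolding v1 v2 using assms[OF that] by simp
    show ?thesis
      using A that by (cases "x c \<noteq> x v") (auto simp: two_path_est_def)
  qed
  show ?thesis
  proof (cases "x c")
    case False
    hence "\<forall>v<n. two_path_est n c x g z v = Some (x v)"
      using est by (auto simp: two_path_est_def)
    thus ?thesis by (simp add: est_success_def)
  next
    case True
    hence "\<forall>v<n. two_path_est n c x g z v = Some (\<not> x v)"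
      using est by (auto simp: two_path_est_def)
    thus ?thesis by (simp add: est_success_def)
  qed
qed

theorem mainTheorem6:
  fixes n c :: nat and p eps delta :: real and x :: "nat \<Rightarrow> bool"
  assumes "c < n"
    and "0 \<le> p" and "p \<le> 1"
    and "0 \<le> eps" and "eps < 1/2"
    and "delta > 0"
    and "((real n - 2) * p^2 * (1 - 2*eps)^4 / 2) /
           (1 + (1/3) * (1 + p^2 * (1 - 2*eps)^2) * (1 - 2*eps)^2) \<ge> (1 + delta) * ln (real n)"
  shows "measure_pmf.prob (ER_noise_pmf n p eps) {(g, z). est_success n c x g z}
           \<ge> 1 - real n powr (- delta)"
proof -
  note cn = assms(1) and p0 = assms(2) and p1 = assms(3) and e0 = assms(4) and e1 = assms(5)
    and d0 = assms(6) and hyp = assms(7)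
  define M where "M = ER_noise_pmf n p eps"
  define V where "V = {0..<n} - {c}"
  define S where "S v = {(g,z::nat\<times>nat\<Rightarrow>bool). card {k\<in>{0..<n}-{c,v}. g (ekey c k) \<and> g (ekey k v) \<and> z (ekey c k) = z (ekey k v)}
           \<le> card {k\<in>{0..<n}-{c,v}. g (ekey c k) \<and> g (ekey k v) \<and> z (ekey c k) \<noteq> z (ekey k v)}}" for v
  define A where "A = {(g, z). est_success n c x g z}"
  define Y where "Y = p^2 * (1-2*eps)^4/2"
  have npos: "real n > 0" using cn by simp
  have sub: "UNIV - A \<subseteq> (\<Union>v\<in>V. S v)"
  proof
    fix gz assume "gz \<in> UNIV - A"
    then obtain g z where gz: "gz = (g,z)" and ns: "\<not> est_success n c x g z"
      by (auto simp: A_def)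
    have "\<exists>v\<in>V. (g,z) \<in> S v"
    proof (rule ccontr)
      assume "\<not> ?thesis"
      hence "est_success n c x g z"
        by (intro success_if) (auto simp: V_def S_def not_le)
      with ns show False by simp
    qed
    thus "gz \<in> (\<Union>v\<in>V. S v)" using gz by auto
  qed
  have bound_v: "measure_pmf.prob M (S v) \<le> real n powr (-(1+delta))" if "v \<in> V" for v
  proof -
    have vn: "v < n" "v \<noteq> c" using that by (auto simp: V_def)
    hence n2: "n \<ge> 2" using cn by linarith
    have Yle: "Y \<le> 1/2"
    proof -
      have "(1-2*eps)^4 \<le> 1" using e0 e1 by (intro power_le_one) auto
      moreover have "p^2 \<le> 1" using p0 p1 by (simp add: power_le_one)
      ultimately have "p^2 * (1-2*eps)^4 \<le> 1" by (simp add: mult_le_one)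
      thus ?thesis by (simp add: Y_def)
    qed
    have Y0: "Y \<ge> 0" by (simp add: Y_def)
    have "measure_pmf.prob M (S v) \<le> (1 - Y) ^ (n-2)"
      unfolding M_def S_def Y_def using vertex_bound[OF cn vn p0 p1 e0 e1] by simp
    also have "\<dots> \<le> exp (-Y) ^ (n-2)"
      by (rule power_mono) (use Yle exp_ge_add_one_self[of "-Y"] in auto)
    also have "\<dots> = exp (- (real n - 2) * Y)"
      using n2 by (simp add: exp_of_nat_mult[symmetric] of_nat_diff algebra_simps)
    also have "\<dots> \<le> exp (- ((1 + delta) * ln (real n)))"
    proof -
      define Dn where "Dn = 1 + (1/3) * (1 + p^2 * (1 - 2*eps)^2) * (1 - 2*eps)^2"
      have Dn1: "Dn \<ge> 1" unfolding Dn_def by (intro add_increasing2 mult_nonneg_nonneg) auto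
      have X0: "(real n - 2) * Y \<ge> 0" using n2 Y0 by simp
      have "((real n - 2) * Y) / Dn \<le> (real n - 2) * Y"
        using Dn1 X0 by (simp add: divide_le_eq mult_le_cancel_left1)
      moreover have "((real n - 2) * Y) / Dn \<ge> (1 + delta) * ln (real n)"
        using hyp unfolding Dn_def Y_def by (simp add: mult.assoc)
      ultimately show ?thesis by (simp add: algebra_simps)
    qed
    also have "\<dots> = real n powr (-(1+delta))"
      using npos by (simp add: powr_def algebra_simps)
    finally show ?thesis .
  qed
  have "measure_pmf.prob M (UNIV - A) \<le> measure_pmf.prob M (\<Union>v\<in>V. S v)"
    by (rule measure_pmf.finite_measure_mono[OF sub]) simp
  also have "\<dots> \<le> (\<Sum>v\<in>V. measure_pmf.prob M (S v))"
    by (rule measure_pmf.finite_measure_subadditive_finite) (auto simp: V_def)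
  also have "\<dots> \<le> (\<Sum>v\<in>V. real n powr (-(1+delta)))"
    by (rule sum_mono) (rule bound_v)
  also have "\<dots> = (real n - 1) * real n powr (-(1+delta))"
  proof -
    have "card V = n - 1" using cn by (simp add: V_def)
    thus ?thesis using cn by (simp add: of_nat_diff)
  qed
  also have "\<dots> \<le> real n powr (-delta)"
  proof -
    have m: "-(1+delta) = -delta - 1" by simp
    have "real n powr (-(1+delta)) = real n powr (-delta) / real n powr 1"
      unfolding m by (rule powr_diff)
    also have "\<dots> = real n powr (-delta) / real n" using npos by simp
    finally have e: "real n powr (-(1+delta)) = real n powr (-delta) / real n" .
    have "(real n - 1) * (real n powr (-delta) / real n) \<le> real n * (real n powr (-delta) / real n)"
      by (intro mult_right_mono) auto
    thus ?thesis unfolding e using npos by simp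
  qed
  finally have "measure_pmf.prob M (UNIV - A) \<le> real n powr (-delta)" .
  moreover have "measure_pmf.prob M (UNIV - A) = 1 - measure_pmf.prob M A"
    using measure_pmf.prob_compl[of A M] by simp
  ultimately show ?thesis unfolding M_def A_def by simp
qed


end
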